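(* Let $(N,A_1,A_2,\dots)$ be as in the context. Then $N_\delta(t)=N_\delta(ct)$ for all $t\in\mathbb{R}^d\setminus\{0\}$, $\delta\ge0$ and $c>0$. If moreover Conditions (C1) and (C7) hold, then there exist $\delta_0>0$ and $\eta>0$ such that $\mathbb{E}[N_\delta(t)]>1+\eta$ for all $t\in\mathbb{R}^d\setminus\{0\}$ and all $\delta\in[0,\delta_0]$.
   Context: Notation: $G$ is the set of $d\times d$ nonnegative matrices; $|x|=\sum_i|x_i|$; $\mathbb{S}^{d-1}=\{x\in\mathbb{R}^d:|x|=1\}$. Setting: random $A_i\in G$, $N=\#\{i:A_i\ne0\}<\infty$ a.s., $A_i\ne0$ iff $i\le N$. For $t\in\mathbb{R}^d$ and $\delta\ge0$: $N(t)=\#\{i\ge1:A_i^Tt\ne0\}$ and $N_\delta(t)=\#\{1\le i\le N:|A_i^Tt|>\delta|t|\}$. (C1) $N\ge1$ a.s., $\mathbb{E}[N]\in(1,\infty)$, $A_i\in G$, $A_i\ne0$ iff $i\le N$. (C7) A.s. $N(t)\ge1$ for all $t\ne0$, and $\mathbb{P}[N(t)=1]<1$ for each $t\ne0$; there exist $\varepsilon_0>0$ and for each $t\in\mathbb{S}^{d-1}$ an index $i(t)\in\mathbb{N}^*$ with $A_{i(t)}^Tt\ne0$ such that $\sup_{t\in\mathbb{S}^{d-1}}\mathbb{E}[|A_{i(t)}^Tt|^{-\varepsilon_0}]<\infty$. *)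

theory Defs
  imports "HOL-Probability.Probability"
begin

text \<open>A w i is the i-th random matrix (only indices i >= 1 are meaningful),
  N w is the random number of nonzero matrices.\<close>

definition l1norm :: "real^'d \<Rightarrow> real" where
  "l1norm x = (\<Sum>j\<in>UNIV. \<bar>x $ j\<bar>)"

definition Ncount :: "('w \<Rightarrow> nat \<Rightarrow> real^'d^'d) \<Rightarrow> real^'d \<Rightarrow> 'w \<Rightarrow> nat" where
  "Ncount A t w = card {i. 1 \<le> i \<and> transpose (A w i) *v t \<noteq> 0}"

definition Ndelta :: "('w \<Rightarrow> nat \<Rightarrow> real^'d^'d) \<Rightarrow> ('w \<Rightarrow> nat) \<Rightarrow> real \<Rightarrow> real^'d \<Rightarrow> 'w \<Rightarrow> nat" where
  "Ndelta A N \<delta> t w = card {i. 1 \<le> i \<and> i \<le> N w \<and> l1norm (transpose (A w i) *v t) > \<delta> * l1norm t}"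

text \<open>Condition (C1) (the structural parts A_i in G, A_i <> 0 iff i <= N are part of the setting).\<close>
definition cond_C1 :: "'w measure \<Rightarrow> ('w \<Rightarrow> nat) \<Rightarrow> bool" where
  "cond_C1 M N \<longleftrightarrow>
     (AE w in M. 1 \<le> N w) \<and>
     1 < (\<integral>\<^sup>+ w. of_nat (N w) \<partial>M) \<and> (\<integral>\<^sup>+ w. of_nat (N w) \<partial>M) < \<infinity>"

text \<open>Condition (C7); the index i(t) is allowed to be a random (measurable) index.\<close>
definition cond_C7 :: "'w measure \<Rightarrow> ('w \<Rightarrow> nat \<Rightarrow> real^'d^'d) \<Rightarrow> bool" where
  "cond_C7 M A \<longleftrightarrow>
     (AE w in M. \<forall>t::real^'d. t \<noteq> 0 \<longrightarrow> 1 \<le> Ncount A t w) \<and>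
     (\<forall>t::real^'d. t \<noteq> 0 \<longrightarrow> measure M {w \<in> space M. Ncount A t w = 1} < 1) \<and>
     (\<exists>\<epsilon>0>0. \<exists>idx :: real^'d \<Rightarrow> 'w \<Rightarrow> nat.
        (\<forall>t. idx t \<in> M \<rightarrow>\<^sub>M count_space UNIV) \<and>
        (\<forall>t. l1norm t = 1 \<longrightarrow>
              (AE w in M. 1 \<le> idx t w \<and> transpose (A w (idx t w)) *v t \<noteq> 0)) \<and>
        (\<exists>C::real. \<forall>t. l1norm t = 1 \<longrightarrow>
              (\<integral>\<^sup>+ w. ennreal (l1norm (transpose (A w (idx t w)) *v t) powr (- \<epsilon>0)) \<partial>M)
                \<le> ennreal C))"

end

theory Submission
  imports Defs
begin

lemma l1norm_nonneg: "0 \<le> l1norm x"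
  unfolding l1norm_def by (simp add: sum_nonneg)

lemma l1norm_scale: "l1norm (c *\<^sub>R x) = \<bar>c\<bar> * l1norm x"
  unfolding l1norm_def by (simp add: abs_mult sum_distrib_left)

lemma l1norm_pos: "x \<noteq> 0 \<Longrightarrow> 0 < l1norm x"
proof -
  assume "x \<noteq> 0"
  then obtain j where "x $ j \<noteq> 0" by (metis vec_eq_iff zero_index)
  then have "0 < \<bar>x $ j\<bar>" by simp
  also have "\<dots> \<le> l1norm x" unfolding l1norm_def
    by (rule member_le_sum) auto
  finally show ?thesis .
qed

lemma l1norm_zero_iff: "l1norm x = 0 \<longleftrightarrow> x = 0"
proof
  assume "l1norm x = 0" then show "x = 0" using l1norm_pos[of x] by force
qed (simp add: l1norm_def)

lemma l1norm_tendsto: "(f \<longlongrightarrow> l) F \<Longrightarrow> ((\<lambda>n. l1norm (f n)) \<longlongrightarrow> l1norm l) F"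
  unfolding l1norm_def by (intro tendsto_intros)

lemma mv_tendsto: fixes B :: "real^'n^'m" shows "(f \<longlongrightarrow> l) F \<Longrightarrow> ((\<lambda>n. B *v f n) \<longlongrightarrow> B *v l) F"
  by (rule bounded_linear.tendsto[OF matrix_vector_mul_bounded_linear])

lemma scaling:
  assumes "0 < c"
  shows "Ndelta A N \<delta> t w = Ndelta A N \<delta> (c *\<^sub>R t) w"
proof -
  have e: "\<And>a b. (\<delta> * (c * b) < c * a) \<longleftrightarrow> (\<delta> * b < a)"
    using assms by (metis mult.left_commute mult_less_cancel_left_pos)
  show ?thesis unfolding Ndelta_def
    by (simp add: matrix_vector_mult_scaleR l1norm_scale assms abs_of_pos e)
qed

lemma card_as_sum: "card {i. 1 \<le> i \<and> i \<le> (n::nat) \<and> P i} = (\<Sum>i\<in>{1..n}. if P i then 1 else 0)"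
proof -
  have "{i. 1 \<le> i \<and> i \<le> n \<and> P i} = {i\<in>{1..n}. P i}" by auto
  then show ?thesis by (simp add: sum.inter_filter[symmetric])
qed

lemma l1_transpose: "l1norm (transpose B *v t) = (\<Sum>j\<in>UNIV. \<bar>\<Sum>k\<in>UNIV. B $ k $ j * t $ k\<bar>)"
  unfolding l1norm_def matrix_vector_mult_def transpose_def by simp

lemma meas_Nd:
  assumes N: "N \<in> M \<rightarrow>\<^sub>M count_space UNIV"
    and A: "\<And>i j k. (\<lambda>w. A w i $ j $ k) \<in> borel_measurable M"
  shows "(\<lambda>w. real (Ndelta A N \<delta> t w)) \<in> borel_measurable M"
proof -
  note [measurable] = A
  define f where "f = (\<lambda>(n::nat) w. (\<Sum>i\<in>{1..n}. if \<delta> * l1norm t < l1norm (transpose (A w i) *v t) then 1 else 0::real))"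
  have eq: "(\<lambda>w. real (Ndelta A N \<delta> t w)) = (\<lambda>w. f (N w) w)"
    unfolding Ndelta_def f_def by (subst card_as_sum) (auto simp: of_nat_sum intro!: sum.cong)
  have "(\<lambda>w. f (N w) w) \<in> borel_measurable M"
  proof (rule measurable_compose_countable[OF _ N])
    fix n show "f n \<in> borel_measurable M"
      unfolding f_def l1_transpose by measurable
  qed
  then show ?thesis using eq by simp
qed

lemma Ncount_eq:
  fixes A :: "'w \<Rightarrow> nat \<Rightarrow> real^'d^'d" and s :: "real^'d" and N :: "'w \<Rightarrow> nat"
  assumes "\<And>w i. 1 \<le> i \<Longrightarrow> (A w i \<noteq> 0 \<longleftrightarrow> i \<le> N w)"
  shows "Ncount A s w = card {i. 1 \<le> i \<and> i \<le> N w \<and> transpose (A w i) *v s \<noteq> 0}"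
proof -
  have "{i. 1 \<le> i \<and> transpose (A w i) *v s \<noteq> 0} = {i. 1 \<le> i \<and> i \<le> N w \<and> transpose (A w i) *v s \<noteq> 0}"
  proof safe
    fix i assume "1 \<le> i" "transpose (A w i) *v s \<noteq> 0"
    then have "A w i \<noteq> 0" by auto
    then show "i \<le> N w" using assms \<open>1 \<le> i\<close> by blast
  qed
  then show ?thesis unfolding Ncount_def by simp
qed

lemma Ncount_Nd0:
  fixes A :: "'w \<Rightarrow> nat \<Rightarrow> real^'d^'d" and s :: "real^'d" and N :: "'w \<Rightarrow> nat"
  assumes "\<And>w i. 1 \<le> i \<Longrightarrow> (A w i \<noteq> 0 \<longleftrightarrow> i \<le> N w)"
  shows "Ncount A s w = Ndelta A N 0 s w"
proof -
  have e: "0 < l1norm x \<longleftrightarrow> x \<noteq> 0" for x :: "real^'d"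
    by (metis l1norm_pos l1norm_zero_iff less_irrefl)
  have "Ncount A s w = card {i. 1 \<le> i \<and> i \<le> N w \<and> transpose (A w i) *v s \<noteq> 0}"
    by (rule Ncount_eq[OF assms])
  also have "\<dots> = Ndelta A N 0 s w" unfolding Ndelta_def by (simp only: e mult_zero_left)
  finally show ?thesis .
qed

lemma lower_bound:
  fixes A :: "'w \<Rightarrow> nat \<Rightarrow> real^'d^'d" and s :: "real^'d" and N :: "'w \<Rightarrow> nat" and M :: "'w measure"
  assumes P: "prob_space M"
    and N: "N \<in> M \<rightarrow>\<^sub>M count_space UNIV"
    and Am: "\<And>i j k. (\<lambda>w. A w i $ j $ k) \<in> borel_measurable M"
    and AN: "\<And>w i. 1 \<le> i \<Longrightarrow> (A w i \<noteq> 0 \<longleftrightarrow> i \<le> N w)"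
    and C7: "cond_C7 M A"
    and s: "s \<noteq> 0"
  shows "1 < (\<integral>\<^sup>+ w. of_nat (Ncount A s w) \<partial>M)"
proof -
  interpret prob_space M by (rule P)
  have rm: "(\<lambda>w. real (Ncount A s w)) \<in> borel_measurable M"
    using meas_Nd[OF N Am, where \<delta>=0 and t=s] by (simp add: Ncount_Nd0[OF AN])
  define E where "E = {w\<in>space M. real (Ncount A s w) \<noteq> 1}"
  define F where "F = {w\<in>space M. Ncount A s w = 1}"
  have Em: "E \<in> sets M" unfolding E_def using rm by measurable
  have Fm: "F = space M - E" unfolding E_def F_def by auto
  have "prob F < 1" using C7 s unfolding cond_C7_def F_def by blast
  then have pE: "0 < prob E" using prob_compl[OF Em] Fm by simp
  have ae1: "AE w in M. 1 \<le> Ncount A s w" using C7 s unfolding cond_C7_def by auto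
  have "AE w in M. 1 + indicator E w \<le> (of_nat (Ncount A s w) :: ennreal)"
    using ae1
  proof eventually_elim
    case (elim w)
    show ?case
    proof (cases "w \<in> E")
      case True
      then have "2 \<le> Ncount A s w" using elim unfolding E_def by auto
      then have "(2::ennreal) \<le> of_nat (Ncount A s w)"
        by (metis of_nat_le_iff of_nat_numeral)
      then show ?thesis using True by (simp add: one_add_one)
    next
      case False
      then show ?thesis using elim by simp
    qed
  qed
  then have i1: "(\<integral>\<^sup>+ w. 1 + indicator E w \<partial>M) \<le> (\<integral>\<^sup>+ w. of_nat (Ncount A s w) \<partial>M)"
    by (rule nn_integral_mono_AE)
  have i2: "(\<integral>\<^sup>+ w. 1 + indicator E w \<partial>M) = 1 + emeasure M E"
    using Em by (subst nn_integral_add) (auto simp: emeasure_space_1)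
  have i3: "1 + emeasure M E = ennreal (1 + prob E)"
    by (simp add: emeasure_eq_measure ennreal_plus[symmetric])
  have i4: "1 < ennreal (1 + prob E)" using pE by simp
  show ?thesis using i1 i2 i3 i4 by (metis order_less_le_trans)
qed

theorem lemma4p1:
  fixes M :: "'w measure" and A :: "'w \<Rightarrow> nat \<Rightarrow> real^'d^'d" and N :: "'w \<Rightarrow> nat"
  assumes "prob_space M"
    and "N \<in> M \<rightarrow>\<^sub>M count_space UNIV"
    and "\<And>i j k. (\<lambda>w. A w i $ j $ k) \<in> borel_measurable M"
    and "\<And>w i j k. 0 \<le> A w i $ j $ k"
    and "\<And>w i. 1 \<le> i \<Longrightarrow> (A w i \<noteq> 0 \<longleftrightarrow> i \<le> N w)"
  shows "(\<forall>w (t::real^'d) \<delta> (c::real). t \<noteq> 0 \<longrightarrow> 0 \<le> \<delta> \<longrightarrow> 0 < c \<longrightarrow>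
            Ndelta A N \<delta> t w = Ndelta A N \<delta> (c *\<^sub>R t) w)
       \<and> (cond_C1 M N \<and> cond_C7 M A \<longrightarrow>
           (\<exists>\<delta>0>0. \<exists>\<eta>>0. \<forall>(t::real^'d) \<delta>. t \<noteq> 0 \<longrightarrow> 0 \<le> \<delta> \<longrightarrow> \<delta> \<le> \<delta>0 \<longrightarrow>
              ennreal (1 + \<eta>) < (\<integral>\<^sup>+ w. of_nat (Ndelta A N \<delta> t w) \<partial>M)))"
proof (intro conjI impI)
  show "\<forall>w (t::real^'d) \<delta> (c::real). t \<noteq> 0 \<longrightarrow> 0 \<le> \<delta> \<longrightarrow> 0 < c \<longrightarrow>
            Ndelta A N \<delta> t w = Ndelta A N \<delta> (c *\<^sub>R t) w"
    by (intro allI impI scaling)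
next
  assume C: "cond_C1 M N \<and> cond_C7 M A"
  then have C7: "cond_C7 M A" by simp
  note P = assms(1) and Nm = assms(2) and Am = assms(3) and AN = assms(5)
  have um: "(\<lambda>w. (of_nat (Ndelta A N \<delta> t w) :: ennreal)) \<in> borel_measurable M" for \<delta> t
  proof -
    have "(\<lambda>w. ennreal (real (Ndelta A N \<delta> t w))) \<in> borel_measurable M"
      using meas_Nd[OF Nm Am] by measurable
    then show ?thesis by (simp add: ennreal_of_nat_eq_real_of_nat)
  qed
  show "\<exists>\<delta>0>0. \<exists>\<eta>>0. \<forall>(t::real^'d) \<delta>. t \<noteq> 0 \<longrightarrow> 0 \<le> \<delta> \<longrightarrow> \<delta> \<le> \<delta>0 \<longrightarrow>
              ennreal (1 + \<eta>) < (\<integral>\<^sup>+ w. of_nat (Ndelta A N \<delta> t w) \<partial>M)"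
  proof (rule ccontr)
    assume H: "\<not> ?thesis"
    have "\<forall>n::nat. \<exists>t \<delta>. t \<noteq> 0 \<and> 0 \<le> \<delta> \<and> \<delta> \<le> inverse (real (Suc n)) \<and>
       (\<integral>\<^sup>+ w. of_nat (Ndelta A N \<delta> t w) \<partial>M) \<le> ennreal (1 + inverse (real (Suc n)))"
    proof
      fix n :: nat
      have "inverse (real (Suc n)) > 0" by simp
      then show "\<exists>t \<delta>. t \<noteq> 0 \<and> 0 \<le> \<delta> \<and> \<delta> \<le> inverse (real (Suc n)) \<and>
       (\<integral>\<^sup>+ w. of_nat (Ndelta A N \<delta> t w) \<partial>M) \<le> ennreal (1 + inverse (real (Suc n)))"
        using H by (meson not_le)
    qed
    then obtain T D where TD: "\<And>n. T n \<noteq> 0 \<and> 0 \<le> D n \<and> D n \<le> inverse (real (Suc n)) \<and>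
       (\<integral>\<^sup>+ w. of_nat (Ndelta A N (D n) (T n) w) \<partial>M) \<le> ennreal (1 + inverse (real (Suc n)))"
      by metis
    define S where "S n = inverse (l1norm (T n)) *\<^sub>R T n" for n
    have pos: "0 < l1norm (T n)" for n using TD l1norm_pos by blast
    have S1: "l1norm (S n) = 1" for n
      unfolding S_def l1norm_scale using pos[of n] by simp
    have SN: "Ndelta A N (D n) (S n) w = Ndelta A N (D n) (T n) w" for n w
      unfolding S_def by (rule scaling[symmetric]) (simp add: pos)
    have "bounded (range S)"
      unfolding bounded_iff using S1 norm_le_l1_cart by (metis l1norm_def rangeE)
    then obtain s r where r: "strict_mono r" and sl: "(S \<circ> r) \<longlonglongrightarrow> s"
      using bounded_imp_convergent_subsequence by blast
    have "(\<lambda>n. l1norm ((S \<circ> r) n)) \<longlonglongrightarrow> l1norm s" by (rule l1norm_tendsto[OF sl])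
    then have "l1norm s = 1" using S1 by (simp add: LIMSEQ_const_iff)
    then have s0: "s \<noteq> 0" using l1norm_zero_iff by (metis zero_neq_one)
    have inv0: "(\<lambda>n. inverse (real (Suc (r n)))) \<longlonglongrightarrow> 0"
      using LIMSEQ_subseq_LIMSEQ[OF LIMSEQ_inverse_real_of_nat r] by (simp add: o_def)
    define u where "u n w = (of_nat (Ndelta A N (D (r n)) (S (r n)) w) :: ennreal)" for n w
    have pw: "of_nat (Ncount A s w) \<le> liminf (\<lambda>n. u n w)" for w
    proof (rule Liminf_bounded)
      define I where "I = {i. 1 \<le> i \<and> i \<le> N w \<and> transpose (A w i) *v s \<noteq> 0}"
      have fI: "finite I" unfolding I_def by (rule finite_subset[of _ "{..N w}"]) auto
      have "\<forall>i\<in>I. eventually (\<lambda>n. D (r n) * l1norm (S (r n)) < l1norm (transpose (A w i) *v S (r n))) sequentially"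
      proof
        fix i assume "i \<in> I"
        then have p: "0 < l1norm (transpose (A w i) *v s)" unfolding I_def using l1norm_pos by blast
        have t1: "(\<lambda>n. transpose (A w i) *v (S \<circ> r) n) \<longlonglongrightarrow> transpose (A w i) *v s"
          by (rule mv_tendsto[OF sl])
        have t2: "(\<lambda>n. l1norm (transpose (A w i) *v (S \<circ> r) n)) \<longlonglongrightarrow> l1norm (transpose (A w i) *v s)"
          by (rule l1norm_tendsto[OF t1])
        have t3: "(\<lambda>n. l1norm (transpose (A w i) *v (S \<circ> r) n) - inverse (real (Suc (r n)))) \<longlonglongrightarrow> l1norm (transpose (A w i) *v s) - 0"
          by (rule tendsto_diff[OF t2 inv0])
        have p': "0 < l1norm (transpose (A w i) *v s) - 0" using p by simp
        have "eventually (\<lambda>n. 0 < l1norm (transpose (A w i) *v (S \<circ> r) n) - inverse (real (Suc (r n)))) sequentially"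
          by (rule order_tendstoD(1)[OF t3 p'])
        then show "eventually (\<lambda>n. D (r n) * l1norm (S (r n)) < l1norm (transpose (A w i) *v S (r n))) sequentially"
        proof (rule eventually_mono)
          fix n assume "0 < l1norm (transpose (A w i) *v (S \<circ> r) n) - inverse (real (Suc (r n)))"
          then show "D (r n) * l1norm (S (r n)) < l1norm (transpose (A w i) *v S (r n))"
            using TD[of "r n"] S1[of "r n"] by simp
        qed
      qed
      then have ev: "eventually (\<lambda>n. \<forall>i\<in>I. D (r n) * l1norm (S (r n)) < l1norm (transpose (A w i) *v S (r n))) sequentially"
        by (rule eventually_ball_finite[OF fI])
      show "eventually (\<lambda>n. of_nat (Ncount A s w) \<le> u n w) sequentially"
        using ev
      proof (rule eventually_mono)
        fix n assume a: "\<forall>i\<in>I. D (r n) * l1norm (S (r n)) < l1norm (transpose (A w i) *v S (r n))"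
        have "card I \<le> Ndelta A N (D (r n)) (S (r n)) w"
          unfolding Ndelta_def
          by (rule card_mono) (use a in \<open>auto simp: I_def\<close>)
        moreover have "Ncount A s w = card I" unfolding I_def by (rule Ncount_eq[OF AN])
        ultimately show "of_nat (Ncount A s w) \<le> u n w"
          unfolding u_def by simp
      qed
    qed
    have "(\<integral>\<^sup>+ w. of_nat (Ncount A s w) \<partial>M) \<le> (\<integral>\<^sup>+ w. liminf (\<lambda>n. u n w) \<partial>M)"
      by (rule nn_integral_mono) (rule pw)
    also have "\<dots> \<le> liminf (\<lambda>n. integral\<^sup>N M (u n))"
      by (rule nn_integral_liminf) (simp add: u_def um)
    also have "\<dots> \<le> liminf (\<lambda>n. ennreal (1 + inverse (real (Suc (r n)))))"
    proof (rule Liminf_mono[OF always_eventually], rule allI)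
      fix n
      have TD4: "(\<integral>\<^sup>+ w. of_nat (Ndelta A N (D (r n)) (T (r n)) w) \<partial>M) \<le> ennreal (1 + inverse (real (Suc (r n))))"
        using TD by blast
      have "integral\<^sup>N M (u n) = (\<integral>\<^sup>+ w. of_nat (Ndelta A N (D (r n)) (T (r n)) w) \<partial>M)"
        unfolding u_def SN ..
      then show "integral\<^sup>N M (u n) \<le> ennreal (1 + inverse (real (Suc (r n))))"
        using TD4 by simp
    qed
    also have "\<dots> = 1"
    proof (rule lim_imp_Liminf)
      show "(\<lambda>n. ennreal (1 + inverse (real (Suc (r n))))) \<longlonglongrightarrow> 1"
        using tendsto_ennrealI[OF tendsto_add[OF tendsto_const inv0, of 1]] by simp
    qed simp
    finally have "(\<integral>\<^sup>+ w. of_nat (Ncount A s w) \<partial>M) \<le> 1" .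
    moreover have "1 < (\<integral>\<^sup>+ w. of_nat (Ncount A s w) \<partial>M)"
      by (rule lower_bound[OF P Nm Am AN C7 s0])
    ultimately show False by simp
  qed
qed

end
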